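(* Let $\phi\in L^2(-1,0)$, let $D(z)=-iz+e^{-iz}+\int_{-1}^0e^{i\tau z}\phi(\tau)\,d\tau$ with zero set $\Lambda$, let $\vec e_\lambda=(1,e^{i\lambda\tau})$, $\lambda\in\Lambda$, and let $\{\vec x_\lambda=(\xi_\lambda,x_\lambda)\}_{\lambda\in\Lambda}$ be the biorthogonal system. Then for every $\lambda\in\Lambda$, $$\overline{\xi_\lambda}=\frac{-i}{D'(\lambda)},$$ and for all $z\in\mathbb C$ (with the right-hand side understood by continuity at $z=\lambda$), $$\int_{-1}^0e^{izt}\overline{x_\lambda(t)}\,dt=\frac1{D'(\lambda)}\cdot\frac{e^{-iz}+\int_{-1}^0e^{iz\tau}\phi(\tau)\,d\tau+i\lambda}{z-\lambda}.$$
   Context: $\mathcal M=\mathbb C\times L^2(-1,0)$ with inner product $\langle(\xi,x),(\eta,y)\rangle=\xi\bar\eta+\int_{-1}^0x(t)\overline{y(t)}\,dt$. Standing assumptions: all zeros of $D$ lie in $\mathbb C_+=\{\operatorname{Im}z>0\}$ and are simple. The system $\{\vec e_\lambda\}$ is complete and minimal in $\mathcal M$, and $\{\vec x_\lambda\}$ is the unique system in $\mathcal M$ with $\langle\vec e_\mu,\vec x_\lambda\rangle=\delta_{\lambda,\mu}$ for $\lambda,\mu\in\Lambda$. *)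

theory Defs
  imports "HOL-Analysis.Analysis"
begin

text \<open>Elements of M = C x L2(-1,0) are pairs (xi, x) with x :: real => complex.\<close>

type_synonym Mvec = "complex \<times> (real \<Rightarrow> complex)"

definition L2m :: "(real \<Rightarrow> complex) \<Rightarrow> bool" where
  "L2m f \<longleftrightarrow> set_borel_measurable lborel {-1..0::real} f \<and>
     set_integrable lborel {-1..0::real} (\<lambda>t. (cmod (f t))^2)"

definition inM :: "Mvec \<Rightarrow> bool" where
  "inM u \<longleftrightarrow> L2m (snd u)"

definition Mip :: "Mvec \<Rightarrow> Mvec \<Rightarrow> complex" where
  "Mip u w = fst u * cnj (fst w) + (LINT t:{-1..0}|lborel. snd u t * cnj (snd w t))"

definition Mdist :: "Mvec \<Rightarrow> Mvec \<Rightarrow> real" where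
  "Mdist u w = sqrt ((cmod (fst u - fst w))^2 +
      (LINT t:{-1..0}|lborel. (cmod (snd u t - snd w t))^2))"

definition Mcomb :: "complex set \<Rightarrow> (complex \<Rightarrow> complex) \<Rightarrow> (complex \<Rightarrow> Mvec) \<Rightarrow> Mvec" where
  "Mcomb F c v = ((\<Sum>l\<in>F. c l * fst (v l)), (\<lambda>t. \<Sum>l\<in>F. c l * snd (v l) t))"

definition complete_sys :: "complex set \<Rightarrow> (complex \<Rightarrow> Mvec) \<Rightarrow> bool" where
  "complete_sys \<Lambda> v \<longleftrightarrow> (\<forall>u. inM u \<longrightarrow> (\<forall>\<epsilon>>0. \<exists>F c. finite F \<and> F \<subseteq> \<Lambda> \<and>
       Mdist u (Mcomb F c v) < \<epsilon>))"

definition minimal_sys :: "complex set \<Rightarrow> (complex \<Rightarrow> Mvec) \<Rightarrow> bool" where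
  "minimal_sys \<Lambda> v \<longleftrightarrow> (\<forall>\<mu>\<in>\<Lambda>. \<exists>\<epsilon>>0. \<forall>F c. finite F \<and> F \<subseteq> \<Lambda> - {\<mu>} \<longrightarrow>
       \<epsilon> \<le> Mdist (v \<mu>) (Mcomb F c v))"

definition Dfun :: "(real \<Rightarrow> complex) \<Rightarrow> complex \<Rightarrow> complex" where
  "Dfun \<phi> z = - \<i> * z + exp (- \<i> * z) +
      (LINT \<tau>:{-1..0}|lborel. exp (\<i> * of_real \<tau> * z) * \<phi> \<tau>)"

definition evec :: "complex \<Rightarrow> Mvec" where
  "evec l = (1, (\<lambda>\<tau>. exp (\<i> * l * of_real \<tau>)))"

end

theory Submission
  imports Defs
begin



lemma L2m_integrable:
  assumes "L2m f" shows "set_integrable lborel {-1..0::real} f"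
proof -
  from assms have m: "set_borel_measurable lborel {-1..0::real} f"
    and i: "set_integrable lborel {-1..0::real} (\<lambda>t. (cmod (f t))^2)" by (auto simp: L2m_def)
  have c: "set_integrable lborel {-1..0::real} (\<lambda>t. 1::real)"
    unfolding set_integrable_def by (rule borel_integrable_compact) (auto intro: compact_Icc)
  have i1: "set_integrable lborel {-1..0::real} (\<lambda>t. 1 + (cmod (f t))^2)"
    using set_integral_add(1)[OF c i] by simp
  show ?thesis
  proof (rule set_integrable_bound[OF i1 m], intro AE_I2 impI)
    fix t
    have a: "cmod (f t) \<le> 1 + (cmod (f t))^2"
    proof (cases "cmod (f t) \<le> 1")
      case True then show ?thesis by (simp add: add_increasing2)
    next
      case False
      then have "cmod (f t) * 1 \<le> cmod (f t) * cmod (f t)" by (intro mult_left_mono) auto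
      then show ?thesis by (simp add: power2_eq_square)
    qed
    then show "norm (f t) \<le> norm (1 + (cmod (f t))^2)" by simp
  qed
qed

lemma set_integrable_bdd_mult:
  fixes g f :: "real \<Rightarrow> complex"
  assumes g: "g \<in> borel_measurable lborel" and B: "\<And>t. t \<in> {-1..0} \<Longrightarrow> cmod (g t) \<le> B"
    and f: "set_integrable lborel {-1..0} f"
  shows "set_integrable lborel {-1..0} (\<lambda>t. g t * f t)"
proof (rule set_integrable_bound[where f="\<lambda>t. of_real B * f t"])
  show "set_integrable lborel {-1..0} (\<lambda>t. complex_of_real B * f t)" using f by simp
  have "(\<lambda>t. indicat_real {-1..0} t *\<^sub>R f t) \<in> borel_measurable lborel"
    using f unfolding set_integrable_def by auto
  then have "(\<lambda>t. g t * (indicat_real {-1..0} t *\<^sub>R f t)) \<in> borel_measurable lborel"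
    using g by measurable
  then show "set_borel_measurable lborel {-1..0} (\<lambda>t. g t * f t)"
    unfolding set_borel_measurable_def by (simp add: algebra_simps)
  show "AE x in lborel. x \<in> {-1..0} \<longrightarrow> cmod (g x * f x) \<le> cmod (complex_of_real B * f x)"
  proof (intro AE_I2 impI)
    fix x :: real assume x: "x \<in> {-1..0}"
    have "0 \<le> B" using B[OF x] norm_ge_zero order_trans by blast
    then show "cmod (g x * f x) \<le> cmod (complex_of_real B * f x)"
      using B[OF x] by (simp add: norm_mult mult_right_mono)
  qed
qed



lemma exp_int:
  fixes w :: complex and a :: real
  assumes w: "w \<noteq> 0" and a: "a \<le> 0"
  shows "(LINT s|lborel. indicator {a..0} s *\<^sub>R exp (\<i> * w * of_real s)) = (1 - exp (\<i> * w * of_real a)) / (\<i> * w)"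
proof -
  have "(LBINT s=a..(0::real). exp (\<i> * w * of_real s)) = exp (\<i> * w * of_real 0) / (\<i> * w) - exp (\<i> * w * of_real a) / (\<i> * w)"
  proof (rule interval_integral_FTC_finite[where F="\<lambda>s. exp (\<i> * w * of_real s) / (\<i> * w)"])
    show "continuous_on {min a 0..max a 0} (\<lambda>s. exp (\<i> * w * complex_of_real s))"
      by (intro continuous_intros)
    fix x :: real
    have "((\<lambda>z. exp (\<i> * w * z) / (\<i> * w)) has_field_derivative exp (\<i> * w * of_real x)) (at (of_real x))"
      using w by (auto intro!: derivative_eq_intros)
    from has_vector_derivative_real_field[OF this]
    show "((\<lambda>s. exp (\<i> * w * complex_of_real s) / (\<i> * w)) has_vector_derivative exp (\<i> * w * complex_of_real x)) (at x within {min a 0..max a 0})" .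
  qed
  moreover have "(LBINT s=a..(0::real). exp (\<i> * w * of_real s)) = (LINT s|lborel. indicator {a..0} s *\<^sub>R exp (\<i> * w * of_real s))"
    using a by (simp add: interval_integral_Icc set_lebesgue_integral_def)
  ultimately show ?thesis by (simp add: diff_divide_distrib)
qed

lemma Phi_meas:
  fixes g :: "real \<Rightarrow> complex"
  assumes [measurable]: "g \<in> borel_measurable borel"
  shows "(\<lambda>s. LINT \<tau>|lborel. indicator {..s} \<tau> *\<^sub>R g \<tau>) \<in> borel_measurable lborel"
proof -
  have "(\<lambda>(s,\<tau>). indicator {..s} \<tau> *\<^sub>R g \<tau>) \<in> borel_measurable (lborel \<Otimes>\<^sub>M lborel)"
  proof -
    have [measurable]: "Measurable.pred (borel \<Otimes>\<^sub>M borel) (\<lambda>x::real\<times>real. snd x \<in> {..fst x})"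
      unfolding atMost_iff by measurable
    show ?thesis by measurable
  qed
  then show ?thesis by measurable
qed



lemma exp_bound:
  fixes w :: complex and s :: real
  assumes "\<bar>s\<bar> \<le> 1"
  shows "cmod (exp (\<i> * w * of_real s)) \<le> exp (cmod w)"
proof -
  have "Re (\<i> * w * of_real s) \<le> cmod (\<i> * w * of_real s)" by (rule complex_Re_le_cmod)
  also have "\<dots> = cmod w * \<bar>s\<bar>" by (simp add: norm_mult)
  also have "\<dots> \<le> cmod w" using assms by (simp add: mult_left_le)
  finally show ?thesis by (simp add: norm_exp_eq_Re)
qed

lemma pred_le_snd_fst[measurable]: "Measurable.pred (borel \<Otimes>\<^sub>M borel) (\<lambda>x::real\<times>real. snd x \<in> {..fst x})"
  unfolding atMost_iff by measurable

lemma pred_le_fst_snd[measurable]: "Measurable.pred (borel \<Otimes>\<^sub>M borel) (\<lambda>x::real\<times>real. fst x \<in> {..snd x})"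
  unfolding atMost_iff by measurable

lemma fubini_step:
  fixes g :: "real \<Rightarrow> complex" and w :: complex
  assumes gm[measurable]: "g \<in> borel_measurable borel" and gi: "integrable lborel g"
    and g0: "\<And>\<tau>. \<tau> \<notin> {-1..0} \<Longrightarrow> g \<tau> = 0" and w: "w \<noteq> 0"
  shows "(LINT s|lborel. indicator {-1..0} s *\<^sub>R (exp (\<i> * w * of_real s) * (LINT \<tau>|lborel. indicator {..s} \<tau> *\<^sub>R g \<tau>)))
        = (LINT \<tau>|lborel. g \<tau> * ((1 - exp (\<i> * w * of_real \<tau>)) / (\<i> * w)))"
proof -
  have gm'[measurable]: "g \<in> borel_measurable lborel" using gm by simp
  define F where "F \<tau> s = of_real (indicator {-1..0} s) * exp (\<i> * w * of_real s) * (indicator {..s} \<tau> *\<^sub>R g \<tau>)" for \<tau> s :: real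
  have Fm[measurable]: "case_prod F \<in> borel_measurable (lborel \<Otimes>\<^sub>M lborel)"
    unfolding F_def by measurable
  have 1: "(LINT s|lborel. indicator {-1..0} s *\<^sub>R (exp (\<i> * w * of_real s) * (LINT \<tau>|lborel. indicator {..s} \<tau> *\<^sub>R g \<tau>)))
     = (LINT s|lborel. LINT \<tau>|lborel. F \<tau> s)"
    unfolding F_def by (simp add: scaleR_conv_of_real mult.assoc)
  have Fb: "norm (F \<tau> s) \<le> indicator {-1..0} s *\<^sub>R (exp (cmod w) * norm (g \<tau>))" for \<tau> s
  proof (cases "s \<in> {-1..0}")
    case True
    then have "\<bar>s\<bar> \<le> 1" by auto
    from exp_bound[OF this, of w] show ?thesis using True
      by (auto simp: F_def norm_mult indicator_def intro: mult_right_mono)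
  qed (simp add: F_def)
  have Fi: "integrable lborel (\<lambda>s. F \<tau> s)" for \<tau>
  proof (rule Bochner_Integration.integrable_bound)
    show "integrable lborel (\<lambda>s::real. indicator {-1..0} s *\<^sub>R (exp (cmod w) * norm (g \<tau>)))"
      by (rule borel_integrable_compact) (simp_all add: compact_Icc)
    have "(\<lambda>s. case_prod F (\<tau>, s)) \<in> borel_measurable lborel" using Fm by measurable
    then show "(\<lambda>s. F \<tau> s) \<in> borel_measurable lborel" by simp
    show "AE s in lborel. norm (F \<tau> s) \<le> norm (indicator {-1..0} s *\<^sub>R (exp (cmod w) * norm (g \<tau>)))"
      by (intro AE_I2 order_trans[OF Fb]) simp
  qed
  have int: "integrable (lborel \<Otimes>\<^sub>M lborel) (case_prod F)"
  proof (rule lborel_pair.Fubini_integrable[OF Fm])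
    show "AE x in lborel. integrable lborel (\<lambda>y. case_prod F (x, y))" using Fi by simp
    show "integrable lborel (\<lambda>x. LINT y|lborel. norm (case_prod F (x, y)))"
    proof (rule Bochner_Integration.integrable_bound)
      show "integrable lborel (\<lambda>\<tau>. exp (cmod w) * norm (g \<tau>))" using gi by auto
      show "(\<lambda>x. LINT y|lborel. norm (case_prod F (x, y))) \<in> borel_measurable lborel"
        by measurable
      show "AE x in lborel. norm (LINT y|lborel. norm (case_prod F (x, y))) \<le> norm (exp (cmod w) * norm (g x))"
      proof (intro AE_I2)
        fix x
        have "(LINT y|lborel. norm (F x y)) \<le> (LINT y::real|lborel. indicator {-1..0} y *\<^sub>R (exp (cmod w) * norm (g x)))"
        proof (rule Bochner_Integration.integral_mono)
          show "integrable lborel (\<lambda>y. norm (F x y))" using Fi[of x] by simp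
          show "integrable lborel (\<lambda>y::real. indicator {-1..0} y *\<^sub>R (exp (cmod w) * norm (g x)))"
            by (rule borel_integrable_compact) (simp_all add: compact_Icc)
        qed (rule Fb)
        also have "\<dots> = exp (cmod w) * norm (g x)"
          by simp
        finally show "norm (LINT y|lborel. norm (case_prod F (x, y))) \<le> norm (exp (cmod w) * norm (g x))"
          by (simp add: integral_nonneg)
      qed
    qed
  qed
  have 2: "(LINT s|lborel. LINT \<tau>|lborel. F \<tau> s) = (LINT \<tau>|lborel. LINT s|lborel. F \<tau> s)"
    by (rule lborel_pair.Fubini_integral[OF int])
  have 3: "(LINT s|lborel. F \<tau> s) = g \<tau> * ((1 - exp (\<i> * w * of_real \<tau>)) / (\<i> * w))" for \<tau>
  proof (cases "\<tau> \<in> {-1..0}")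
    case True
    have "(LINT s|lborel. F \<tau> s) = (LINT s|lborel. g \<tau> * (indicator {\<tau>..0} s *\<^sub>R exp (\<i> * w * of_real s)))"
      using True by (intro Bochner_Integration.integral_cong) (auto simp: F_def indicator_def)
    also have "\<dots> = g \<tau> * ((1 - exp (\<i> * w * of_real \<tau>)) / (\<i> * w))"
      using True w exp_int[OF w, of \<tau>] by (simp only: integral_mult_right_zero) simp
    finally show ?thesis .
  qed (simp add: F_def g0)
  show ?thesis using 1 2 3 by simp
qed




lemma cont_set_integrable:
  fixes f :: "real \<Rightarrow> complex"
  shows "continuous_on {-1..0} f \<Longrightarrow> set_integrable lborel {-1..0::real} f"
  unfolding set_integrable_def by (rule borel_integrable_compact) (auto intro: compact_Icc)

lemma set_integrable_cont_mult:
  fixes h f :: "real \<Rightarrow> complex"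
  assumes h: "continuous_on UNIV h" and f: "set_integrable lborel {-1..0} f"
  shows "set_integrable lborel {-1..0} (\<lambda>t. h t * f t)"
proof -
  have "compact (h ` {-1..0})" by (rule compact_continuous_image) (auto intro: continuous_on_subset[OF h] compact_Icc)
  then obtain B where B: "\<And>x. x \<in> h ` {-1..0} \<Longrightarrow> norm x \<le> B"
    using compact_imp_bounded bounded_iff by metis
  have hm: "h \<in> borel_measurable lborel" using borel_measurable_continuous_onI[OF h] by simp
  show ?thesis by (rule set_integrable_bdd_mult[OF hm _ f, of B]) (use B in auto)
qed

lemma isCont_param:
  fixes f :: "real \<Rightarrow> complex"
  assumes f: "set_integrable lborel {-1..0} f"
  shows "isCont (\<lambda>z. LINT s:{-1..0}|lborel. exp (\<i> * z * of_real s) * f s) z0"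
  unfolding continuous_at_sequentially comp_def
proof (intro allI impI)
  fix X :: "nat \<Rightarrow> complex" assume X: "X \<longlonglongrightarrow> z0"
  then have "Bseq X" by (rule convergent_imp_Bseq[OF convergentI])
  then obtain M where M: "\<And>n. cmod (X n) \<le> M" unfolding Bseq_def by auto
  have fm: "(\<lambda>s. indicator {-1..0} s *\<^sub>R f s) \<in> borel_measurable lborel" and fi: "integrable lborel (\<lambda>s. indicator {-1..0} s *\<^sub>R f s)"
    using f by (auto simp: set_integrable_def)
  show "(\<lambda>n. LINT s:{-1..0}|lborel. exp (\<i> * X n * of_real s) * f s) \<longlonglongrightarrow> (LINT s:{-1..0}|lborel. exp (\<i> * z0 * of_real s) * f s)"
    unfolding set_lebesgue_integral_def
  proof (rule integral_dominated_convergence[where w="\<lambda>s. exp M * norm (indicator {-1..0} s *\<^sub>R f s)"])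
    have "(\<lambda>s. exp (\<i> * z0 * of_real s) * (indicator {-1..0} s *\<^sub>R f s)) \<in> borel_measurable lborel"
      using fm by measurable
    then show "(\<lambda>s. indicat_real {-1..0} s *\<^sub>R (exp (\<i> * z0 * of_real s) * f s)) \<in> borel_measurable lborel"
      by (simp add: algebra_simps)
    fix n
    have "(\<lambda>s. exp (\<i> * X n * of_real s) * (indicator {-1..0} s *\<^sub>R f s)) \<in> borel_measurable lborel"
      using fm by measurable
    then show "(\<lambda>s. indicat_real {-1..0} s *\<^sub>R (exp (\<i> * X n * of_real s) * f s)) \<in> borel_measurable lborel"
      by (simp add: algebra_simps)
    show "integrable lborel (\<lambda>s. exp M * norm (indicator {-1..0} s *\<^sub>R f s))"
      by (intro integrable_mult_right integrable_norm fi)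
    show "AE s in lborel. norm (indicat_real {-1..0} s *\<^sub>R (exp (\<i> * X n * of_real s) * f s)) \<le> exp M * norm (indicator {-1..0} s *\<^sub>R f s)"
    proof (intro AE_I2)
      fix s :: real
      show "norm (indicat_real {-1..0} s *\<^sub>R (exp (\<i> * X n * of_real s) * f s)) \<le> exp M * norm (indicator {-1..0} s *\<^sub>R f s)"
      proof (cases "s \<in> {-1..0}")
        case True
        then have "\<bar>s\<bar> \<le> 1" by auto
        from exp_bound[OF this, of "X n"] M[of n] have "cmod (exp (\<i> * X n * of_real s)) \<le> exp M"
          by (meson exp_le_cancel_iff order_trans)
        then show ?thesis using True by (simp add: norm_mult mult_right_mono)
      qed simp
    qed
  next
    show "AE s in lborel. (\<lambda>n. indicat_real {-1..0} s *\<^sub>R (exp (\<i> * X n * of_real s) * f s)) \<longlonglongrightarrow> indicat_real {-1..0} s *\<^sub>R (exp (\<i> * z0 * of_real s) * f s)"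
      by (intro AE_I2 tendsto_intros X)
  qed
qed




lemma set_integrable_cnj:
  fixes f :: "real \<Rightarrow> complex"
  shows "set_integrable lborel S f \<Longrightarrow> set_integrable lborel S (\<lambda>t. cnj (f t))"
  unfolding set_integrable_def
  using complex_integrable_cnj[of lborel "\<lambda>t. indicator S t *\<^sub>R f t"] by (simp add: scaleR_conv_of_real)

lemma sq_diff_bound:
  fixes a b :: complex
  shows "(cmod (a - b))^2 \<le> 2 * (cmod a)^2 + 2 * (cmod b)^2"
proof -
  have "cmod (a - b) \<le> cmod a + cmod b" by (rule norm_triangle_ineq4)
  then have "(cmod (a - b))^2 \<le> (cmod a + cmod b)^2" by (intro power_mono) auto
  moreover have "0 \<le> (cmod a - cmod b)^2" by simp
  ultimately show ?thesis by (simp add: power2_sum power2_diff)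
qed

lemma L2m_diff:
  assumes f: "L2m f" and g: "L2m g"
  shows "L2m (\<lambda>t. f t - g t)"
proof -
  have fm: "(\<lambda>t. indicat_real {-1..0} t *\<^sub>R f t) \<in> borel_measurable lborel"
   and gm: "(\<lambda>t. indicat_real {-1..0} t *\<^sub>R g t) \<in> borel_measurable lborel"
    using f g by (auto simp: L2m_def set_borel_measurable_def)
  have m: "set_borel_measurable lborel {-1..0::real} (\<lambda>t. f t - g t)"
    unfolding set_borel_measurable_def using borel_measurable_diff[OF fm gm]
    by (simp add: scaleR_diff_right)
  have m2: "set_borel_measurable lborel {-1..0::real} (\<lambda>t. (cmod (f t - g t))^2)"
  proof -
    have "(\<lambda>t. (cmod (indicat_real {-1..0} t *\<^sub>R f t - indicat_real {-1..0} t *\<^sub>R g t))^2) \<in> borel_measurable lborel"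
      using fm gm by measurable
    moreover have "(\<lambda>t. (cmod (indicat_real {-1..0} t *\<^sub>R f t - indicat_real {-1..0} t *\<^sub>R g t))^2)
       = (\<lambda>t. indicat_real {-1..0} t *\<^sub>R (cmod (f t - g t))^2)"
      by (auto simp: indicator_def)
    ultimately show ?thesis unfolding set_borel_measurable_def by simp
  qed
  have i: "set_integrable lborel {-1..0::real} (\<lambda>t. 2 * (cmod (f t))^2 + 2 * (cmod (g t))^2)"
    using f g unfolding L2m_def by (intro set_integral_add set_integrable_mult_right) auto
  have "set_integrable lborel {-1..0::real} (\<lambda>t. (cmod (f t - g t))^2)"
  proof (rule set_integrable_bound[OF i m2], intro AE_I2 impI)
    fix t
    show "norm ((cmod (f t - g t))^2) \<le> norm (2 * (cmod (f t))^2 + 2 * (cmod (g t))^2)"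
      using sq_diff_bound[of "f t" "g t"] by simp
  qed
  then show ?thesis using m by (simp add: L2m_def)
qed

lemma Mip_diff:
  assumes a: "inM a" and b: "inM b"
  shows "Mip (evec \<mu>) (fst a - fst b, \<lambda>t. snd a t - snd b t) = Mip (evec \<mu>) a - Mip (evec \<mu>) b"
proof -
  have c: "continuous_on UNIV (\<lambda>t::real. exp (\<i> * \<mu> * of_real t))" by (intro continuous_intros)
  have ia: "set_integrable lborel {-1..0} (\<lambda>t. exp (\<i> * \<mu> * of_real t) * cnj (snd a t))"
    using a by (intro set_integrable_cont_mult[OF c] set_integrable_cnj L2m_integrable) (simp add: inM_def)
  have ib: "set_integrable lborel {-1..0} (\<lambda>t. exp (\<i> * \<mu> * of_real t) * cnj (snd b t))"
    using b by (intro set_integrable_cont_mult[OF c] set_integrable_cnj L2m_integrable) (simp add: inM_def)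
  have "(LINT t:{-1..0}|lborel. exp (\<i> * \<mu> * of_real t) * cnj (snd a t - snd b t))
     = (LINT t:{-1..0}|lborel. exp (\<i> * \<mu> * of_real t) * cnj (snd a t) - exp (\<i> * \<mu> * of_real t) * cnj (snd b t))"
    by (simp add: algebra_simps)
  also have "\<dots> = (LINT t:{-1..0}|lborel. exp (\<i> * \<mu> * of_real t) * cnj (snd a t)) - (LINT t:{-1..0}|lborel. exp (\<i> * \<mu> * of_real t) * cnj (snd b t))"
    by (rule set_integral_diff(2)[OF ia ib])
  finally show ?thesis by (simp add: Mip_def evec_def algebra_simps)
qed




lemma cmod_diff_sq:
  fixes a b :: complex
  shows "(cmod (a - b))^2 = (cmod a)^2 + (cmod b)^2 - 2 * Re (b * cnj a)"
  unfolding cmod_power2 by (simp add: power2_eq_square algebra_simps)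

lemma complete_zero:
  assumes compl: "complete_sys \<Lambda> evec" and w: "inM w" and orth: "\<forall>\<mu>\<in>\<Lambda>. Mip (evec \<mu>) w = 0"
  shows "fst w = 0 \<and> (AE t in lborel. t \<in> {-1..0::real} \<longrightarrow> snd w t = 0)"
proof -
  obtain fw sw where wdef: "w = (fw, sw)" by (cases w)
  have swL2: "L2m sw" using w wdef by (simp add: inM_def)
  then have i1: "integrable lborel (\<lambda>t. indicat_real {-1..0} t *\<^sub>R (cmod (sw t))^2)"
    by (simp add: L2m_def set_integrable_def)
  have swI: "set_integrable lborel {-1..0} (\<lambda>t. cnj (sw t))"
    by (intro set_integrable_cnj L2m_integrable swL2)
  define A1 where "A1 = (LINT t|lborel. indicat_real {-1..0} t *\<^sub>R (cmod (sw t))^2)"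
  define N where "N = (cmod fw)^2 + A1"
  have A1nn: "0 \<le> A1" unfolding A1_def by (intro Bochner_Integration.integral_nonneg) (simp add: indicator_def)
  have key: "N \<le> (Mdist w (Mcomb F c evec))^2" if F: "finite F" "F \<subseteq> \<Lambda>" for F c
  proof -
    define fv where "fv = (\<Sum>l\<in>F. c l)"
    define sv where "sv t = (\<Sum>l\<in>F. c l * exp (\<i> * l * of_real t))" for t :: real
    have comb: "Mcomb F c evec = (fv, sv)"
      by (simp add: Mcomb_def evec_def fv_def sv_def fun_eq_iff)
    have cont: "continuous_on UNIV sv" unfolding sv_def by (intro continuous_intros)
    have i2: "integrable lborel (\<lambda>t. indicat_real {-1..0} t *\<^sub>R (cmod (sv t))^2)"
    proof (rule borel_integrable_compact)
      show "continuous_on {-1..0} (\<lambda>x. (cmod (sv x))\<^sup>2)"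
        by (intro continuous_intros continuous_on_subset[OF cont]) auto
    qed (rule compact_Icc)
    have i3: "integrable lborel (\<lambda>t. indicat_real {-1..0} t *\<^sub>R (sv t * cnj (sw t)))"
      using set_integrable_cont_mult[OF cont swI] by (simp add: set_integrable_def)
    define A2 where "A2 = (LINT t|lborel. indicat_real {-1..0} t *\<^sub>R (cmod (sv t))^2)"
    define A3 where "A3 = (LINT t|lborel. indicat_real {-1..0} t *\<^sub>R (sv t * cnj (sw t)))"
    have A2nn: "0 \<le> A2" unfolding A2_def by (intro Bochner_Integration.integral_nonneg) (simp add: indicator_def)
    have ei: "integrable lborel (\<lambda>t. indicat_real {-1..0} t *\<^sub>R (exp (\<i> * l * of_real t) * cnj (sw t)))" for l
    proof -
      have "continuous_on UNIV (\<lambda>t::real. exp (\<i> * l * of_real t))" by (intro continuous_intros)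
      from set_integrable_cont_mult[OF this swI] show ?thesis by (simp add: set_integrable_def)
    qed
    have "A3 = (LINT t|lborel. (\<Sum>l\<in>F. c l * (indicat_real {-1..0} t *\<^sub>R (exp (\<i> * l * of_real t) * cnj (sw t)))))"
      unfolding A3_def sv_def
      by (intro Bochner_Integration.integral_cong refl) (simp add: sum_distrib_left sum_distrib_right scaleR_sum_right algebra_simps)
    also have "\<dots> = (\<Sum>l\<in>F. (LINT t|lborel. c l * (indicat_real {-1..0} t *\<^sub>R (exp (\<i> * l * of_real t) * cnj (sw t)))))"
      by (rule Bochner_Integration.integral_sum) (intro integrable_mult_right ei)
    also have "\<dots> = (\<Sum>l\<in>F. c l * (LINT t|lborel. indicat_real {-1..0} t *\<^sub>R (exp (\<i> * l * of_real t) * cnj (sw t))))"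
      by (simp only: integral_mult_right_zero)
    finally have A3eq: "A3 = \<dots>" .
    have Mip0: "fv * cnj fw + A3 = 0"
    proof -
      have "fv * cnj fw + A3 = (\<Sum>l\<in>F. c l * Mip (evec l) w)"
        unfolding A3eq fv_def
        by (simp add: Mip_def evec_def wdef set_lebesgue_integral_def sum.distrib sum_distrib_left algebra_simps)
      also have "\<dots> = 0" using orth F by (intro sum.neutral) auto
      finally show ?thesis .
    qed
    have "(LINT t|lborel. indicat_real {-1..0} t *\<^sub>R (cmod (sw t - sv t))^2)
        = (LINT t|lborel. indicat_real {-1..0} t *\<^sub>R (cmod (sw t))^2 + indicat_real {-1..0} t *\<^sub>R (cmod (sv t))^2
             - 2 * Re (indicat_real {-1..0} t *\<^sub>R (sv t * cnj (sw t))))"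
      by (intro Bochner_Integration.integral_cong refl) (simp add: cmod_diff_sq algebra_simps)
    also have "\<dots> = A1 + A2 - 2 * Re A3"
    proof -
      let ?a = "\<lambda>t. indicat_real {-1..0} t *\<^sub>R (cmod (sw t))^2"
      let ?b = "\<lambda>t. indicat_real {-1..0} t *\<^sub>R (cmod (sv t))^2"
      let ?c = "\<lambda>t. Re (indicat_real {-1..0} t *\<^sub>R (sv t * cnj (sw t)))"
      have iRe: "integrable lborel ?c" by (rule integrable_Re[OF i3])
      have "(LINT t|lborel. ?a t + ?b t - 2 * ?c t) = (LINT t|lborel. ?a t + ?b t) - (LINT t|lborel. 2 * ?c t)"
        by (rule Bochner_Integration.integral_diff) (rule Bochner_Integration.integrable_add[OF i1 i2], rule integrable_mult_right[OF iRe])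
      also have "\<dots> = (LINT t|lborel. ?a t) + (LINT t|lborel. ?b t) - 2 * (LINT t|lborel. ?c t)"
        by (subst Bochner_Integration.integral_add[OF i1 i2]) simp
      also have "(LINT t|lborel. ?c t) = Re A3"
        unfolding A3_def by (rule integral_bounded_linear[OF bounded_linear_Re i3])
      finally show ?thesis unfolding A1_def A2_def by simp
    qed
    finally have I: "(LINT t|lborel. indicat_real {-1..0} t *\<^sub>R (cmod (sw t - sv t))^2) = A1 + A2 - 2 * Re A3" .
    have "(Mdist w (Mcomb F c evec))^2 = (cmod (fw - fv))^2 + (A1 + A2 - 2 * Re A3)"
    proof -
      have "0 \<le> (cmod (fw - fv))^2 + (LINT t|lborel. indicat_real {-1..0} t *\<^sub>R (cmod (sw t - sv t))^2)"
        by (intro add_nonneg_nonneg Bochner_Integration.integral_nonneg) (auto simp: indicator_def)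
      then have nn: "0 \<le> (cmod (fw - fv))^2 + (A1 + A2 - 2 * Re A3)" by (simp only: I)
      show ?thesis
        unfolding Mdist_def comb wdef set_lebesgue_integral_def fst_conv snd_conv I
        using nn by simp
    qed
    also have "\<dots> = N + (cmod fv)^2 + A2 - 2 * Re (fv * cnj fw + A3)"
      unfolding N_def cmod_diff_sq by (simp add: algebra_simps)
    also have "\<dots> = N + (cmod fv)^2 + A2" using Mip0 by simp
    finally show ?thesis using A2nn by simp
  qed
  have N0: "N = 0"
  proof (rule ccontr)
    assume "N \<noteq> 0"
    moreover have "0 \<le> (cmod fw)^2" by simp
    ultimately have Np: "0 < N" using A1nn N_def by linarith
    then obtain F c where F: "finite F" "F \<subseteq> \<Lambda>" and d: "Mdist w (Mcomb F c evec) < sqrt N"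
      using compl w unfolding complete_sys_def by (meson real_sqrt_gt_zero)
    have "0 \<le> Mdist w (Mcomb F c evec)" unfolding Mdist_def set_lebesgue_integral_def
      by (intro real_sqrt_ge_zero add_nonneg_nonneg Bochner_Integration.integral_nonneg) (auto simp: indicator_def)
    then have "(Mdist w (Mcomb F c evec))^2 < (sqrt N)^2" using d by (intro power_strict_mono) auto
    with key[OF F, of c] Np show False by simp
  qed
  then have "fw = 0" "A1 = 0" using A1nn unfolding N_def by (auto simp: add_nonneg_eq_0_iff)
  have "AE t in lborel. indicat_real {-1..0} t *\<^sub>R (cmod (sw t))^2 = 0"
    using \<open>A1 = 0\<close> i1 unfolding A1_def
    by (subst (asm) integral_nonneg_eq_0_iff_AE) (auto simp: indicator_def)
  then have "AE t in lborel. t \<in> {-1..0::real} \<longrightarrow> sw t = 0"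
    by eventually_elim (auto simp: indicator_def)
  then show ?thesis using \<open>fw = 0\<close> wdef by simp
qed




lemma cnj_measurable[measurable]: "cnj \<in> borel_measurable borel"
  by (intro borel_measurable_continuous_onI continuous_intros)

theorem proposition3:
  fixes \<phi> :: "real \<Rightarrow> complex" and \<Lambda> :: "complex set"
    and x :: "complex \<Rightarrow> complex \<times> (real \<Rightarrow> complex)"
  assumes phi: "L2m \<phi>"
    and Lam: "\<Lambda> = {z. Dfun \<phi> z = 0}"
    and upper: "\<forall>l\<in>\<Lambda>. Im l > 0"
    and simple: "\<forall>l\<in>\<Lambda>. deriv (Dfun \<phi>) l \<noteq> 0"
    and compl: "complete_sys \<Lambda> evec"
    and minim: "minimal_sys \<Lambda> evec"
    and xM: "\<forall>l\<in>\<Lambda>. inM (x l)"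
    and biorth: "\<forall>l\<in>\<Lambda>. \<forall>m\<in>\<Lambda>. Mip (evec m) (x l) = (if l = m then 1 else 0)"
    and lam: "l \<in> \<Lambda>"
  shows "cnj (fst (x l)) = - \<i> / deriv (Dfun \<phi>) l
     \<and> (\<forall>z. z \<noteq> l \<longrightarrow>
          (LINT t:{-1..0}|lborel. exp (\<i> * z * of_real t) * cnj (snd (x l) t))
          = 1 / deriv (Dfun \<phi>) l *
            ((exp (- \<i> * z) + (LINT \<tau>:{-1..0}|lborel. exp (\<i> * z * of_real \<tau>) * \<phi> \<tau>) - \<i> * l)
             / (z - l)))
     \<and> ((\<lambda>z. 1 / deriv (Dfun \<phi>) l *
            ((exp (- \<i> * z) + (LINT \<tau>:{-1..0}|lborel. exp (\<i> * z * of_real \<tau>) * \<phi> \<tau>) - \<i> * l)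
             / (z - l)))
        \<longlongrightarrow> (LINT t:{-1..0}|lborel. exp (\<i> * l * of_real t) * cnj (snd (x l) t))) (at l)"
proof -
  have phim: "set_borel_measurable lborel {-1..0::real} \<phi>" using phi by (simp add: L2m_def)
  have phiI: "set_integrable lborel {-1..0::real} \<phi>" by (rule L2m_integrable[OF phi])
  have phim'[measurable]: "(\<lambda>t. indicat_real {-1..0} t *\<^sub>R \<phi> t) \<in> borel_measurable borel"
    using phim by (simp add: set_borel_measurable_def)
  have cexp: "continuous_on UNIV (\<lambda>t::real. exp (\<i> * c * of_real t))" for c by (intro continuous_intros)
  have expI: "set_integrable lborel {-1..0} (\<lambda>t. exp (\<i> * c * of_real t) * \<phi> t)" for c
    by (rule set_integrable_cont_mult[OF cexp phiI])
  define g where "g \<tau> = exp (\<i> * l * of_real \<tau>) * (indicat_real {-1..0} \<tau> *\<^sub>R \<phi> \<tau>)" for \<tau> :: real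
  have gm[measurable]: "g \<in> borel_measurable borel" unfolding g_def by measurable
  have gi: "integrable lborel g"
  proof -
    have "g = (\<lambda>t. indicat_real {-1..0} t *\<^sub>R (exp (\<i> * l * of_real t) * \<phi> t))"
      unfolding g_def by (auto simp: fun_eq_iff indicator_def)
    then show ?thesis using expI[of l] by (simp add: set_integrable_def)
  qed
  have g0: "\<And>\<tau>. \<tau> \<notin> {-1..0} \<Longrightarrow> g \<tau> = 0" by (simp add: g_def)
  define Phi where "Phi s = (LINT \<tau>|lborel. indicator {..s} \<tau> *\<^sub>R g \<tau>)" for s :: real
  have Phim[measurable]: "Phi \<in> borel_measurable borel"
    using Phi_meas[OF gm] unfolding Phi_def by simp
  define Bg where "Bg = (LINT \<tau>|lborel. norm (g \<tau>))"
  have Phib: "cmod (Phi s) \<le> Bg" for s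
  proof -
    have "cmod (Phi s) \<le> (LINT \<tau>|lborel. norm (indicator {..s} \<tau> *\<^sub>R g \<tau>))"
      unfolding Phi_def by (rule integral_norm_bound)
    also have "\<dots> \<le> Bg" unfolding Bg_def
    proof (rule Bochner_Integration.integral_mono)
      show "integrable lborel (\<lambda>\<tau>. norm (indicat_real {..s} \<tau> *\<^sub>R g \<tau>))"
        by (intro integrable_norm integrable_mult_indicator gi) auto
      show "integrable lborel (\<lambda>\<tau>. norm (g \<tau>))" by (intro integrable_norm gi)
    qed (auto simp: indicator_def)
    finally show ?thesis .
  qed
  define y where "y s = - \<i> * exp (\<i> * (- l) * of_real s) * (exp (- \<i> * l) + Phi s)" for s :: real
  have ym[measurable]: "y \<in> borel_measurable borel" unfolding y_def by measurable
  define By where "By = exp (cmod l) * (exp (cmod l) + Bg)"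
  have yb: "cmod (y s) \<le> By" if s: "s \<in> {-1..0}" for s
  proof -
    have s1: "\<bar>s\<bar> \<le> 1" using s by auto
    have e1: "cmod (exp (\<i> * (- l) * of_real s)) \<le> exp (cmod l)"
      using exp_bound[OF s1, of "-l"] by simp
    have e2: "cmod (exp (- \<i> * l)) \<le> exp (cmod l)"
      using exp_bound[of 1 "-l"] by simp
    have "cmod (exp (- \<i> * l) + Phi s) \<le> exp (cmod l) + Bg"
      using norm_triangle_ineq[of "exp (- \<i> * l)" "Phi s"] e2 Phib[of s] by linarith
    then show ?thesis unfolding y_def By_def norm_mult
      using e1 by (simp add: mult_mono)
  qed
  have yI: "set_integrable lborel {-1..0} y"
  proof -
    have "set_integrable lborel {-1..0} (\<lambda>t. y t * 1)"
      by (rule set_integrable_bdd_mult[of _ By]) (use yb in \<open>auto intro: cont_set_integrable continuous_intros\<close>)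
    then show ?thesis by simp
  qed
  define K where "K z = - \<i> + (LINT s:{-1..0}|lborel. exp (\<i> * z * of_real s) * y s)" for z
  define E where "E z = exp (- \<i> * z) + (LINT \<tau>:{-1..0}|lborel. exp (\<i> * z * of_real \<tau>) * \<phi> \<tau>)" for z
  have DE: "Dfun \<phi> z = - \<i> * z + E z" for z
    unfolding Dfun_def E_def by (simp add: mult_ac)
  have EL: "E \<mu> = \<i> * \<mu>" if "\<mu> \<in> \<Lambda>" for \<mu>
    using that Lam DE[of \<mu>] by simp
  have KEY: "(z - l) * (K z + \<i>) = E z - E l" if zl: "z \<noteq> l" for z
  proof -
    define w where "w = z - l"
    have w0: "w \<noteq> 0" using zl by (simp add: w_def)
    let ?ind = "indicat_real {-1..0}"
    have ez: "exp (\<i> * z * of_real s) * exp (\<i> * (- l) * of_real s) = exp (\<i> * w * of_real s)" for s :: real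
      by (simp add: w_def exp_add[symmetric] algebra_simps)
    have split: "?ind s *\<^sub>R (exp (\<i> * z * of_real s) * y s)
       = (- \<i> * exp (- \<i> * l)) * (?ind s *\<^sub>R exp (\<i> * w * of_real s))
         + (- \<i>) * (?ind s *\<^sub>R (exp (\<i> * w * of_real s) * Phi s))" for s :: real
    proof -
      have "exp (\<i> * z * of_real s) * y s = - \<i> * (exp (\<i> * z * of_real s) * exp (\<i> * (- l) * of_real s)) * (exp (- \<i> * l) + Phi s)"
        unfolding y_def by (simp add: algebra_simps)
      also have "\<dots> = - \<i> * exp (\<i> * w * of_real s) * (exp (- \<i> * l) + Phi s)" by (simp only: ez)
      finally have "exp (\<i> * z * of_real s) * y s = (- \<i> * exp (- \<i> * l)) * exp (\<i> * w * of_real s) + (- \<i>) * (exp (\<i> * w * of_real s) * Phi s)"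
        by (simp add: algebra_simps)
      then have "?ind s *\<^sub>R (exp (\<i> * z * of_real s) * y s) = ?ind s *\<^sub>R ((- \<i> * exp (- \<i> * l)) * exp (\<i> * w * of_real s) + (- \<i>) * (exp (\<i> * w * of_real s) * Phi s))"
        by (rule arg_cong)
      then show ?thesis by (simp only: scaleR_right_distrib mult_scaleR_right)
    qed
    have i1: "integrable lborel (\<lambda>s. ?ind s *\<^sub>R exp (\<i> * w * of_real s))"
    proof -
      have "continuous_on {-1..0} (\<lambda>s::real. exp (\<i> * w * of_real s))" by (intro continuous_intros)
      from cont_set_integrable[OF this] show ?thesis by (simp add: set_integrable_def)
    qed
    have i2: "integrable lborel (\<lambda>s. ?ind s *\<^sub>R (exp (\<i> * w * of_real s) * Phi s))"
    proof -
      have "set_integrable lborel {-1..0} (\<lambda>s. exp (\<i> * w * of_real s) * Phi s)"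
      proof (rule set_integrable_cont_mult[OF cexp])
        have "set_integrable lborel {-1..0} (\<lambda>s. Phi s * 1)"
          by (rule set_integrable_bdd_mult[of _ Bg]) (use Phib in \<open>auto intro: cont_set_integrable continuous_intros\<close>)
        then show "set_integrable lborel {-1..0} Phi" by simp
      qed
      then show ?thesis by (simp add: set_integrable_def)
    qed
    have "K z + \<i> = (LINT s|lborel. ?ind s *\<^sub>R (exp (\<i> * z * of_real s) * y s))"
      by (simp add: K_def set_lebesgue_integral_def)
    also have "\<dots> = (LINT s|lborel. (- \<i> * exp (- \<i> * l)) * (?ind s *\<^sub>R exp (\<i> * w * of_real s))
         + (- \<i>) * (?ind s *\<^sub>R (exp (\<i> * w * of_real s) * Phi s)))"
      by (simp only: split)
    also have "\<dots> = (- \<i> * exp (- \<i> * l)) * (LINT s|lborel. ?ind s *\<^sub>R exp (\<i> * w * of_real s))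
         + (- \<i>) * (LINT s|lborel. ?ind s *\<^sub>R (exp (\<i> * w * of_real s) * Phi s))"
      by (subst Bochner_Integration.integral_add) (auto intro: integrable_mult_right i1 i2 simp only: integral_mult_right_zero)
    also have "(LINT s|lborel. ?ind s *\<^sub>R exp (\<i> * w * of_real s)) = (1 - exp (\<i> * w * of_real (-1))) / (\<i> * w)"
      using exp_int[OF w0, of "-1"] by simp
    also have "(LINT s|lborel. ?ind s *\<^sub>R (exp (\<i> * w * of_real s) * Phi s))
        = (LINT \<tau>|lborel. g \<tau> * ((1 - exp (\<i> * w * of_real \<tau>)) / (\<i> * w)))"
      unfolding Phi_def by (rule fubini_step[OF gm gi g0 w0])
    also have "\<dots> = (LINT \<tau>|lborel. (g \<tau> - g \<tau> * exp (\<i> * w * of_real \<tau>)) / (\<i> * w))"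
      by (simp add: algebra_simps diff_divide_distrib)
    also have "\<dots> = ((LINT \<tau>|lborel. g \<tau>) - (LINT \<tau>|lborel. g \<tau> * exp (\<i> * w * of_real \<tau>))) / (\<i> * w)"
    proof -
      have "g \<tau> * exp (\<i> * w * of_real \<tau>) = ?ind \<tau> *\<^sub>R (exp (\<i> * z * of_real \<tau>) * \<phi> \<tau>)" for \<tau>
        by (simp add: g_def w_def exp_add[symmetric] algebra_simps indicator_def)
      then have "integrable lborel (\<lambda>\<tau>. g \<tau> * exp (\<i> * w * of_real \<tau>))"
        using expI[of z] by (simp add: set_integrable_def)
      then show ?thesis by (simp add: Bochner_Integration.integral_diff[OF gi])
    qed
    also have "(LINT \<tau>|lborel. g \<tau>) = (LINT \<tau>:{-1..0}|lborel. exp (\<i> * l * of_real \<tau>) * \<phi> \<tau>)"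
      unfolding set_lebesgue_integral_def g_def by (intro Bochner_Integration.integral_cong) (auto simp: indicator_def)
    also have "(LINT \<tau>|lborel. g \<tau> * exp (\<i> * w * of_real \<tau>)) = (LINT \<tau>:{-1..0}|lborel. exp (\<i> * z * of_real \<tau>) * \<phi> \<tau>)"
      unfolding set_lebesgue_integral_def g_def
      by (intro Bochner_Integration.integral_cong) (auto simp: indicator_def w_def exp_add[symmetric] algebra_simps)
    finally have Kz: "K z + \<i> = - \<i> * exp (- \<i> * l) * ((1 - exp (\<i> * w * of_real (- 1))) / (\<i> * w)) +
      - \<i> * (((LINT \<tau>:{-1..0}|lborel. exp (\<i> * l * of_real \<tau>) * \<phi> \<tau>) - (LINT \<tau>:{-1..0}|lborel. exp (\<i> * z * of_real \<tau>) * \<phi> \<tau>)) / (\<i> * w))" .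
    have ee: "exp (- \<i> * l) * exp (\<i> * w * of_real (- 1)) = exp (- \<i> * z)"
      by (simp add: w_def exp_add[symmetric] algebra_simps)
    have "(z - l) * (K z + \<i>) = w * (K z + \<i>)" by (simp add: w_def)
    also have "\<dots> = - exp (- \<i> * l) * (1 - exp (\<i> * w * of_real (- 1))) - ((LINT \<tau>:{-1..0}|lborel. exp (\<i> * l * of_real \<tau>) * \<phi> \<tau>) - (LINT \<tau>:{-1..0}|lborel. exp (\<i> * z * of_real \<tau>) * \<phi> \<tau>))"
      unfolding Kz using w0 by (simp add: field_simps)
    also have "\<dots> = E z - E l" unfolding E_def using ee by (simp add: algebra_simps)
    finally show ?thesis .
  qed
  have Kc: "isCont K l" unfolding K_def by (intro continuous_intros isCont_param yI)
  have Dd: "(Dfun \<phi> has_field_derivative K l) (at l)"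
  proof -
    have ev: "\<forall>\<^sub>F z in at l. (Dfun \<phi> z - Dfun \<phi> l) / (z - l) = K z"
    proof -
      have "(Dfun \<phi> z - Dfun \<phi> l) / (z - l) = K z" if zl: "z \<noteq> l" for z
      proof -
        have "Dfun \<phi> z - Dfun \<phi> l = (E z - E l) - \<i> * (z - l)"
          unfolding DE by (simp add: algebra_simps)
        also have "\<dots> = (z - l) * (K z + \<i>) - \<i> * (z - l)" using KEY[OF zl] by simp
        also have "\<dots> = (z - l) * K z" by (simp add: algebra_simps)
        finally show ?thesis using zl by simp
      qed
      then show ?thesis unfolding eventually_at_filter by (intro always_eventually) auto
    qed
    have "(K \<longlongrightarrow> K l) (at l)" using Kc by (simp add: isCont_def)
    then show ?thesis unfolding has_field_derivative_iff
      using tendsto_cong[OF ev] by simp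
  qed
  have dK: "deriv (Dfun \<phi>) l = K l" by (rule DERIV_imp_deriv[OF Dd])
  have Kl0: "K l \<noteq> 0" using simple lam dK by auto
  have Kmu: "K \<mu> = 0" if "\<mu> \<in> \<Lambda>" "\<mu> \<noteq> l" for \<mu>
  proof -
    have "(\<mu> - l) * (K \<mu> + \<i>) = (\<mu> - l) * \<i>"
      using KEY[of \<mu>] that EL[of \<mu>] EL[OF lam] by (simp add: algebra_simps)
    then show ?thesis using that by simp
  qed
  define u where "u = (cnj (- \<i> / K l), \<lambda>t. cnj (y t / K l))"
  have Mipu: "Mip (evec \<mu>) u = K \<mu> / K l" for \<mu>
  proof -
    have "(\<lambda>t. indicat_real {-1..0} t *\<^sub>R (exp (\<i> * \<mu> * of_real t) * (y t / K l)))
        = (\<lambda>t. (indicat_real {-1..0} t *\<^sub>R (exp (\<i> * \<mu> * of_real t) * y t)) / K l)"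
      by (simp add: fun_eq_iff scaleR_conv_of_real)
    then have "(LINT t:{-1..0}|lborel. exp (\<i> * \<mu> * of_real t) * (y t / K l))
        = (LINT t:{-1..0}|lborel. exp (\<i> * \<mu> * of_real t) * y t) / K l"
      unfolding set_lebesgue_integral_def by simp
    then show ?thesis
      by (simp add: Mip_def evec_def u_def K_def[of \<mu>] add_divide_distrib diff_divide_distrib)
  qed
  have inMu: "inM u"
  proof -
    have m: "set_borel_measurable lborel {-1..0::real} (\<lambda>t. cnj (y t / K l))"
      unfolding set_borel_measurable_def by measurable
    have m2: "set_borel_measurable lborel {-1..0::real} (\<lambda>t. (cmod (cnj (y t / K l)))^2)"
      unfolding set_borel_measurable_def by measurable
    have c: "set_integrable lborel {-1..0::real} (\<lambda>t. (By / cmod (K l))^2)"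
      unfolding set_integrable_def by (rule borel_integrable_compact) (auto intro: compact_Icc)
    have "set_integrable lborel {-1..0::real} (\<lambda>t. (cmod (cnj (y t / K l)))^2)"
    proof (rule set_integrable_bound[OF c m2], intro AE_I2 impI)
      fix t :: real assume t: "t \<in> {-1..0}"
      have "cmod (y t) / cmod (K l) \<le> By / cmod (K l)"
        using yb[OF t] Kl0 by (simp add: divide_right_mono)
      then have "(cmod (y t) / cmod (K l))^2 \<le> (By / cmod (K l))^2"
        by (intro power_mono) auto
      then show "norm ((cmod (cnj (y t / K l)))^2) \<le> norm ((By / cmod (K l))^2)"
        by (simp add: norm_divide)
    qed
    then show ?thesis using m by (simp add: inM_def L2m_def u_def)
  qed
  have xlM: "inM (x l)" using xM lam by simp
  define wv where "wv = (fst (x l) - fst u, \<lambda>t. snd (x l) t - snd u t)"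
  have inMw: "inM wv" using L2m_diff xlM inMu by (simp add: inM_def wv_def)
  have orth: "\<forall>\<mu>\<in>\<Lambda>. Mip (evec \<mu>) wv = 0"
  proof
    fix \<mu> assume mu: "\<mu> \<in> \<Lambda>"
    have "Mip (evec \<mu>) wv = Mip (evec \<mu>) (x l) - K \<mu> / K l"
      unfolding wv_def Mip_diff[OF xlM inMu] Mipu ..
    then show "Mip (evec \<mu>) wv = 0"
      using biorth lam mu Kl0 Kmu[OF mu] by (cases "\<mu> = l") auto
  qed
  from complete_zero[OF compl inMw orth]
  have f1: "fst (x l) = cnj (- \<i> / K l)"
    and ae: "AE t in lborel. t \<in> {-1..0::real} \<longrightarrow> snd (x l) t = cnj (y t / K l)"
    by (auto simp: wv_def u_def)
  have xm: "(\<lambda>t. indicat_real {-1..0} t *\<^sub>R snd (x l) t) \<in> borel_measurable lborel"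
    using xlM by (simp add: inM_def L2m_def set_borel_measurable_def)
  have G: "(LINT t:{-1..0}|lborel. exp (\<i> * z * of_real t) * cnj (snd (x l) t)) = (K z + \<i>) / K l" for z
  proof -
    have "(LINT t:{-1..0}|lborel. exp (\<i> * z * of_real t) * cnj (snd (x l) t))
        = (LINT t:{-1..0}|lborel. exp (\<i> * z * of_real t) * y t / K l)"
      unfolding set_lebesgue_integral_def
    proof (rule integral_cong_AE)
      have "(\<lambda>t. exp (\<i> * z * of_real t) * cnj (indicat_real {-1..0} t *\<^sub>R snd (x l) t)) \<in> borel_measurable lborel"
        using xm by measurable
      then show "(\<lambda>t. indicat_real {-1..0} t *\<^sub>R (exp (\<i> * z * of_real t) * cnj (snd (x l) t))) \<in> borel_measurable lborel"
        by (simp add: scaleR_conv_of_real mult_ac)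
      show "(\<lambda>t. indicat_real {-1..0} t *\<^sub>R (exp (\<i> * z * of_real t) * y t / K l)) \<in> borel_measurable lborel"
        by measurable
      show "AE t in lborel. indicat_real {-1..0} t *\<^sub>R (exp (\<i> * z * of_real t) * cnj (snd (x l) t)) =
          indicat_real {-1..0} t *\<^sub>R (exp (\<i> * z * of_real t) * y t / K l)"
        using ae by eventually_elim (auto simp: indicator_def)
    qed
    also have "\<dots> = (LINT t:{-1..0}|lborel. exp (\<i> * z * of_real t) * y t) / K l"
    proof -
      have "(\<lambda>t. indicat_real {-1..0} t *\<^sub>R (exp (\<i> * z * of_real t) * y t / K l))
          = (\<lambda>t. (indicat_real {-1..0} t *\<^sub>R (exp (\<i> * z * of_real t) * y t)) / K l)"
        by (simp add: fun_eq_iff scaleR_conv_of_real)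
      then show ?thesis unfolding set_lebesgue_integral_def by simp
    qed
    also have "\<dots> = (K z + \<i>) / K l" by (simp add: K_def)
    finally show ?thesis .
  qed
  have R: "1 / deriv (Dfun \<phi>) l *
            ((exp (- \<i> * z) + (LINT \<tau>:{-1..0}|lborel. exp (\<i> * z * of_real \<tau>) * \<phi> \<tau>) - \<i> * l)
             / (z - l)) = (K z + \<i>) / K l" if zl: "z \<noteq> l" for z
  proof -
    have "exp (- \<i> * z) + (LINT \<tau>:{-1..0}|lborel. exp (\<i> * z * of_real \<tau>) * \<phi> \<tau>) - \<i> * l = E z - E l"
      by (simp add: E_def[of z] EL[OF lam])
    also have "\<dots> = (z - l) * (K z + \<i>)" using KEY[OF zl] by simp
    finally show ?thesis using zl by (simp add: dK)
  qed
  have P1: "cnj (fst (x l)) = - \<i> / deriv (Dfun \<phi>) l" using f1 dK by simp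
  have P2: "\<forall>z. z \<noteq> l \<longrightarrow>
          (LINT t:{-1..0}|lborel. exp (\<i> * z * of_real t) * cnj (snd (x l) t))
          = 1 / deriv (Dfun \<phi>) l *
            ((exp (- \<i> * z) + (LINT \<tau>:{-1..0}|lborel. exp (\<i> * z * of_real \<tau>) * \<phi> \<tau>) - \<i> * l)
             / (z - l))"
    using G R by simp
  have P3: "((\<lambda>z. 1 / deriv (Dfun \<phi>) l *
            ((exp (- \<i> * z) + (LINT \<tau>:{-1..0}|lborel. exp (\<i> * z * of_real \<tau>) * \<phi> \<tau>) - \<i> * l)
             / (z - l)))
        \<longlongrightarrow> (LINT t:{-1..0}|lborel. exp (\<i> * l * of_real t) * cnj (snd (x l) t))) (at l)"
  proof -
    have ev: "\<forall>\<^sub>F z in at l. 1 / deriv (Dfun \<phi>) l *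
            ((exp (- \<i> * z) + (LINT \<tau>:{-1..0}|lborel. exp (\<i> * z * of_real \<tau>) * \<phi> \<tau>) - \<i> * l)
             / (z - l)) = (K z + \<i>) / K l"
      unfolding eventually_at_filter using R by (intro always_eventually) auto
    have "(K \<longlongrightarrow> K l) (at l)" using Kc by (simp add: isCont_def)
    then have "((\<lambda>z. (K z + \<i>) / K l) \<longlongrightarrow> (K l + \<i>) / K l) (at l)"
      using Kl0 by (intro tendsto_intros) auto
    then show ?thesis using tendsto_cong[OF ev] G[of l] by simp
  qed
  show ?thesis using P1 P2 P3 by blast
qed


end
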